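(* Let $d=p\geq 2$ be a prime number and let $\varGamma$ be a lattice in $\mathbb{R}^p$. Then the factor group $\operatorname{SOS}(\varGamma)/\operatorname{SOC}(\varGamma)$ is an elementary Abelian $p$-group, i.e., it is the direct sum of cyclic groups of order $p$.
   Context: A lattice in $\mathbb{R}^d$ is a subgroup of the form $\mathbb{Z}b_1\oplus\cdots\oplus\mathbb{Z}b_d$ where $\{b_1,\dots,b_d\}$ is a basis of $\mathbb{R}^d$. Two lattices $\varGamma,\varGamma'$ are commensurate, written $\varGamma\sim\varGamma'$, if $\varGamma\cap\varGamma'$ has finite index both in $\varGamma$ and in $\varGamma'$. $\operatorname{SOC}(\varGamma)=\{R\in\operatorname{SO}(d):\varGamma\sim R\varGamma\}$ and $\operatorname{SOS}(\varGamma)=\{R\in\operatorname{SO}(d):\varGamma\sim\alpha R\varGamma\text{ for some }\alpha>0\}$; these are groups and $\operatorname{SOC}(\varGamma)$ is a normal subgroup of $\operatorname{SOS}(\varGamma)$. Here the direct sum is allowed to be trivial (empty). *)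

theory Defs
  imports "HOL-Analysis.Analysis" "HOL-Algebra.Coset"
begin

definition is_lattice :: "(real^'n) set \<Rightarrow> bool" where
  "is_lattice L \<longleftrightarrow> (\<exists>B :: real^'n^'n. invertible B \<and>
      L = range (\<lambda>z :: int^'n. B *v (\<chi> i. real_of_int (z $ i))))"

definition finite_index :: "(real^'n) set \<Rightarrow> (real^'n) set \<Rightarrow> bool" where
  "finite_index H A \<longleftrightarrow> finite ((\<lambda>x. (\<lambda>h. x + h) ` H) ` A)"

definition commensurate :: "(real^'n) set \<Rightarrow> (real^'n) set \<Rightarrow> bool" where
  "commensurate L L' \<longleftrightarrow> finite_index (L \<inter> L') L \<and> finite_index (L \<inter> L') L'"

definition SO :: "(real^'n^'n) set" where
  "SO = {R. orthogonal_matrix R \<and> det R = 1}"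

definition SOC :: "(real^'n) set \<Rightarrow> (real^'n^'n) set" where
  "SOC L = {R \<in> SO. commensurate L ((\<lambda>x. R *v x) ` L)}"

definition SOS :: "(real^'n) set \<Rightarrow> (real^'n^'n) set" where
  "SOS L = {R \<in> SO. \<exists>\<alpha>>0. commensurate L ((\<lambda>x. \<alpha> *\<^sub>R (R *v x)) ` L)}"

definition SOS_group :: "(real^'n) set \<Rightarrow> (real^'n^'n) monoid" where
  "SOS_group L = \<lparr>carrier = SOS L, mult = (\<lambda>A B. A ** B), one = mat 1\<rparr>"

definition elementary_abelian :: "nat \<Rightarrow> ('a, 'b) monoid_scheme \<Rightarrow> bool" where
  "elementary_abelian p G \<longleftrightarrow> comm_group G \<and> (\<forall>x\<in>carrier G. x [^]\<^bsub>G\<^esub> p = \<one>\<^bsub>G\<^esub>)"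

end

theory Submission
  imports Defs
begin

definition ivec :: "int^'n \<Rightarrow> real^'n" where "ivec z = (\<chi> i. real_of_int (z$i))"
definition Lat :: "real^'n^'n \<Rightarrow> (real^'n) set" where "Lat B = range (\<lambda>z. B *v ivec z)"
definition ratm :: "real^'n^'n \<Rightarrow> bool" where "ratm A \<longleftrightarrow> (\<forall>i j. A$i$j \<in> \<rat>)"
definition intm :: "real^'n^'n \<Rightarrow> bool" where "intm A \<longleftrightarrow> (\<forall>i j. A$i$j \<in> \<int>)"

lemma ivec_add: "ivec (z + w) = ivec z + ivec w"
  by (simp add: ivec_def vec_eq_iff)
lemma ivec_minus: "ivec (- z) = - ivec z"
  by (simp add: ivec_def vec_eq_iff)
lemma ivec_zero: "ivec 0 = 0"
  by (simp add: ivec_def vec_eq_iff)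
lemma ivec_smult: "ivec (\<chi> i. k * z$i) = of_int k *\<^sub>R ivec z"
  by (simp add: ivec_def vec_eq_iff)

lemma Lat_add: "x \<in> Lat B \<Longrightarrow> y \<in> Lat B \<Longrightarrow> x + y \<in> Lat B"
  unfolding Lat_def
proof (elim rangeE)
  fix z w assume "x = B *v ivec z" "y = B *v ivec w"
  then show "x + y \<in> range (\<lambda>z. B *v ivec z)"
    by (intro image_eqI[where x="z+w"]) (auto simp: matrix_vector_right_distrib ivec_add)
qed

lemma Lat_minus: "x \<in> Lat B \<Longrightarrow> - x \<in> Lat B"
  unfolding Lat_def
proof (elim rangeE)
  fix z assume "x = B *v ivec z"
  then show "- x \<in> range (\<lambda>z. B *v ivec z)"
    by (intro image_eqI[where x="-z"]) (auto simp: vec.neg ivec_minus)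
qed

lemma Lat_zero: "0 \<in> Lat B"
  unfolding Lat_def
  by (auto intro!: image_eqI[where x=0] simp: ivec_zero)

lemma Lat_smult: "x \<in> Lat B \<Longrightarrow> of_int k *\<^sub>R x \<in> Lat B"
  unfolding Lat_def
proof (elim rangeE)
  fix z assume "x = B *v ivec z"
  then show "of_int k *\<^sub>R x \<in> range (\<lambda>z. B *v ivec z)"
    by (intro image_eqI[where x="\<chi> i. k * z$i"]) 
       (auto simp: scaleR_matrix_vector_assoc matrix_scaleR_vector_ac ivec_smult)
qed

lemma Lat_image: "(\<lambda>x. M *v x) ` Lat B = Lat (M ** B)"
  unfolding Lat_def by (auto simp: matrix_vector_mul_assoc image_image)

lemma pigeon:
  fixes H A :: "(real^'n) set"
  assumes fi: "finite_index H A" and "0 \<in> H" and xA: "\<And>k::nat. of_nat k *\<^sub>R x \<in> A"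
  shows "\<exists>m::nat. m > 0 \<and> of_nat m *\<^sub>R x \<in> H"
proof -
  define f where "f k = (\<lambda>h. of_nat k *\<^sub>R x + h) ` H" for k :: nat
  have "f ` UNIV \<subseteq> (\<lambda>x. (\<lambda>h. x + h) ` H) ` A"
    using xA unfolding f_def by blast
  then have "finite (f ` UNIV)" using fi unfolding finite_index_def by (rule finite_subset)
  then have "\<not> inj f" using finite_imageD by blast
  then obtain k k' where kk: "k \<noteq> k'" "f k = f k'" unfolding inj_def by blast
  have main: "of_nat (b - a) *\<^sub>R x \<in> H" if "a < b" "f a = f b" for a b
  proof -
    have "of_nat b *\<^sub>R x \<in> f b" unfolding f_def using \<open>0 \<in> H\<close> by force
    then have "of_nat b *\<^sub>R x \<in> f a" using that by simp
    then obtain h where h: "h \<in> H" "of_nat b *\<^sub>R x = of_nat a *\<^sub>R x + h" unfolding f_def by blast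
    have "of_nat (b - a) *\<^sub>R x = of_nat b *\<^sub>R x - of_nat a *\<^sub>R x"
      using that by (simp add: of_nat_diff scaleR_diff_left)
    also have "\<dots> = h" using h by simp
    finally show ?thesis using h by simp
  qed
  show ?thesis
  proof (cases "k < k'")
    case True then show ?thesis using main[OF True kk(2)] by (intro exI[of _ "k'-k"]) auto
  next
    case False then have "k' < k" using kk by simp
    then show ?thesis using main[OF \<open>k' < k\<close> kk(2)[symmetric]] by (intro exI[of _ "k-k'"]) auto
  qed
qed

lemma finite_boxvec: "finite {z::int^'n. \<forall>i. z$i \<in> {0..<N}}"
proof -
  have "{z::int^'n. \<forall>i. z$i \<in> {0..<N}} \<subseteq> (\<lambda>f. \<chi> i. f i) ` (PiE UNIV (\<lambda>_. {0..<N}))"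
  proof
    fix z :: "int^'n" assume "z \<in> {z. \<forall>i. z$i \<in> {0..<N}}"
    then show "z \<in> (\<lambda>f. \<chi> i. f i) ` (PiE UNIV (\<lambda>_. {0..<N}))"
      by (intro image_eqI[where x="\<lambda>i. z$i"]) (auto simp: vec_eq_iff)
  qed
  then show ?thesis by (rule finite_subset) (intro finite_imageI finite_PiE; simp)
qed

lemma finite_index_mult:
  fixes H :: "(real^'n) set" and N :: nat
  assumes "N > 0" and NH: "\<And>x. x \<in> Lat B \<Longrightarrow> of_nat N *\<^sub>R x \<in> H"
    and addH: "\<And>x y. x \<in> H \<Longrightarrow> y \<in> H \<Longrightarrow> x + y \<in> H"
    and negH: "\<And>x. x \<in> H \<Longrightarrow> - x \<in> H"
  shows "finite_index H (Lat B)"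
proof -
  define S where "S = {z::int^'n. \<forall>i. z$i \<in> {0..<int N}}"
  have coset_eq: "(\<lambda>h. x + h) ` H = (\<lambda>h. y + h) ` H" if "x - y \<in> H" for x y
  proof -
    have "x + h \<in> (\<lambda>h. y + h) ` H" if "h \<in> H" for h
      using addH[OF \<open>x - y \<in> H\<close> that] by (intro image_eqI[where x="(x-y)+h"]) auto
    moreover have "y + h \<in> (\<lambda>h. x + h) ` H" if "h \<in> H" for h
      using addH[OF negH[OF \<open>x - y \<in> H\<close>] that] by (intro image_eqI[where x="-(x-y)+h"]) auto
    ultimately show ?thesis by blast
  qed
  have "(\<lambda>x. (\<lambda>h. x + h) ` H) ` Lat B \<subseteq> (\<lambda>z. (\<lambda>h. B *v ivec z + h) ` H) ` S"
  proof
    fix C assume "C \<in> (\<lambda>x. (\<lambda>h. x + h) ` H) ` Lat B"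
    then obtain z where C: "C = (\<lambda>h. B *v ivec z + h) ` H" unfolding Lat_def by blast
    define r where "r = (\<chi> i. z$i mod int N)"
    define q where "q = (\<chi> i. z$i div int N)"
    have "ivec z = ivec r + of_nat N *\<^sub>R ivec q"
      unfolding ivec_def r_def q_def vec_eq_iff
    proof
      fix i
      have "z$i = z$i mod int N + int N * (z$i div int N)" by simp
      then have "real_of_int (z$i) = real_of_int (z$i mod int N) + real N * real_of_int (z$i div int N)"
        by (metis of_int_add of_int_mult of_int_of_nat_eq)
      then show "(\<chi> i. real_of_int (z $ i)) $ i =
         ((\<chi> i. real_of_int ((\<chi> i. z $ i mod int N) $ i)) + real N *\<^sub>R (\<chi> i. real_of_int ((\<chi> i. z $ i div int N) $ i))) $ i"
        by simp
    qed
    then have "B *v ivec z - B *v ivec r = of_nat N *\<^sub>R (B *v ivec q)"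
      by (simp add: matrix_vector_right_distrib scaleR_matrix_vector_assoc matrix_scaleR_vector_ac)
    moreover have "B *v ivec q \<in> Lat B" unfolding Lat_def by blast
    ultimately have "B *v ivec z - B *v ivec r \<in> H" using NH by simp
    then have "C = (\<lambda>h. B *v ivec r + h) ` H" using C coset_eq by simp
    moreover have "r \<in> S" unfolding S_def r_def using \<open>N > 0\<close> by simp
    ultimately show "C \<in> (\<lambda>z. (\<lambda>h. B *v ivec z + h) ` H) ` S" by blast
  qed
  moreover have "finite S" unfolding S_def by (rule finite_boxvec)
  ultimately show ?thesis unfolding finite_index_def by (meson finite_imageI finite_subset)
qed

lemma common_denom:
  fixes A :: "real^'n^'n"
  assumes "ratm A" shows "\<exists>N::nat. N > 0 \<and> intm (of_nat N *\<^sub>R A)"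
proof -
  have "\<forall>p::'n\<times>'n. \<exists>n::nat. n > 0 \<and> of_nat n * A$fst p$snd p \<in> \<int>"
  proof
    fix p :: "'n\<times>'n"
    have "A$fst p$snd p \<in> \<rat>" using assms unfolding ratm_def by blast
    then obtain a b where ab: "0 < b" "A$fst p$snd p = of_int a / of_int b" by (elim Rats_cases')
    then have "of_nat (nat b) * A$fst p$snd p = of_int a" by simp
    then show "\<exists>n::nat. n > 0 \<and> of_nat n * A$fst p$snd p \<in> \<int>" using ab(1)
      by (intro exI[of _ "nat b"]) auto
  qed
  then obtain n where n: "\<And>p. n p > 0 \<and> of_nat (n p) * A$fst p$snd p \<in> \<int>" by metis
  define N where "N = (\<Prod>p\<in>UNIV. n p)"
  have "N > 0" unfolding N_def using n by (simp add: prod_pos)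
  moreover have "intm (of_nat N *\<^sub>R A)" unfolding intm_def
  proof (intro allI)
    fix i j
    have "n (i,j) dvd N" unfolding N_def by (rule dvd_prodI) auto
    then obtain k where k: "N = n (i,j) * k" by blast
    have "(of_nat N *\<^sub>R A)$i$j = of_nat k * (of_nat (n (i,j)) * A$i$j)" by (simp add: k)
    also have "\<dots> \<in> \<int>" using n[of "(i,j)"] by simp
    finally show "(of_nat N *\<^sub>R A)$i$j \<in> \<int>" .
  qed
  ultimately show ?thesis by blast
qed

lemma intm_act: assumes "intm A" shows "\<exists>w. A *v ivec z = ivec w"
proof -
  have I: "(A *v ivec z)$i \<in> \<int>" for i
    using assms unfolding intm_def matrix_vector_mult_def ivec_def
    by (auto intro!: Ints_sum Ints_mult)
  show ?thesis
    by (intro exI[of _ "\<chi> i. floor ((A *v ivec z)$i)"])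
       (unfold ivec_def[of "\<chi> i. floor ((A *v ivec z)$i)"], simp add: vec_eq_iff of_int_floor[OF I])
qed

lemma ivec_axis: "ivec (axis j 1) = axis j 1"
  by (simp add: ivec_def vec_eq_iff axis_def)

lemma col_rat:
  assumes "m > 0" "of_nat m *\<^sub>R (A *v ivec (axis j 1)) = ivec w"
  shows "A$i$j \<in> \<rat>"
proof -
  have "of_nat m * A$i$j = of_int (w$i)"
    using assms(2) unfolding ivec_axis matrix_vector_mult_basis
    by (auto simp: vec_eq_iff column_def ivec_def dest: spec[of _ i])
  then have "A$i$j = of_int (w$i) / of_nat m" using assms(1) by (simp add: field_simps)
  then show ?thesis by simp
qed

lemma Lat_nat_smult: "x \<in> Lat B \<Longrightarrow> of_nat k *\<^sub>R x \<in> Lat B"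
  using Lat_smult[of x B "int k"] by simp

lemma comm_iff:
  fixes B Bi M M' :: "real^'n^'n"
  assumes BBi: "B ** Bi = mat 1" "Bi ** B = mat 1" and MM: "M ** M' = mat 1" "M' ** M = mat 1"
  shows "commensurate (Lat B) ((\<lambda>x. M *v x) ` Lat B) \<longleftrightarrow> ratm (Bi ** M ** B) \<and> ratm (Bi ** M' ** B)"
proof -
  define L where "L = Lat B"
  define L' where "L' = Lat (M ** B)"
  have img: "(\<lambda>x. M *v x) ` Lat B = L'" unfolding L'_def by (rule Lat_image)
  have assoc1: "Bi *v (B *v v) = v" for v by (simp add: matrix_vector_mul_assoc BBi)
  have assoc2: "Bi ** M' ** (M ** B) = Bi ** B" by (metis MM(2) matrix_mul_assoc matrix_mul_rid)
  have assoc3: "M ** B ** (Bi ** M' ** B) = B"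
    by (metis BBi(1) MM(1) matrix_mul_assoc matrix_mul_lid matrix_mul_rid)
  have assoc4: "B ** (Bi ** M ** B) = M ** B"
    by (metis BBi(1) matrix_mul_assoc matrix_mul_lid)
  have subH: "finite_index (L \<inter> L') (Lat C)" if "L' = Lat C \<or> L = Lat C"
      and N: "N > 0" "\<And>x. x \<in> Lat C \<Longrightarrow> of_nat N *\<^sub>R x \<in> L \<inter> L'" for C N
    by (rule finite_index_mult[OF N]) (auto simp: L_def L'_def intro: Lat_add Lat_minus)
  show ?thesis
  proof
    assume c: "commensurate (Lat B) ((\<lambda>x. M *v x) ` Lat B)"
    then have f1: "finite_index (L \<inter> L') L" and f2: "finite_index (L \<inter> L') L'"
      unfolding commensurate_def img L_def by auto
    have z: "0 \<in> L \<inter> L'" unfolding L_def L'_def by (simp add: Lat_zero)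
    have r1: "ratm (Bi ** M ** B)" unfolding ratm_def
    proof (intro allI)
      fix i j
      define x where "x = (M ** B) *v ivec (axis j 1)"
      have "x \<in> L'" unfolding x_def L'_def Lat_def by blast
      then obtain m :: nat where m: "m > 0" "of_nat m *\<^sub>R x \<in> L \<inter> L'"
        using pigeon[OF f2 z, of x] Lat_nat_smult unfolding L'_def by blast
      then obtain w where w: "of_nat m *\<^sub>R x = B *v ivec w" unfolding L_def Lat_def by blast
      have "of_nat m *\<^sub>R ((Bi ** M ** B) *v ivec (axis j 1)) = Bi *v (of_nat m *\<^sub>R x)"
        unfolding x_def by (simp add: matrix_vector_mul_assoc matrix_mul_assoc scaleR_matrix_vector_assoc matrix_scaleR_vector_ac matrix_scalar_ac scalar_matrix_assoc)
      also have "\<dots> = ivec w" using w assoc1 by simp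
      finally show "(Bi ** M ** B)$i$j \<in> \<rat>" by (rule col_rat[OF m(1)])
    qed
    have r2: "ratm (Bi ** M' ** B)" unfolding ratm_def
    proof (intro allI)
      fix i j
      define x where "x = B *v ivec (axis j 1)"
      have "x \<in> L" unfolding x_def L_def Lat_def by blast
      then obtain m :: nat where m: "m > 0" "of_nat m *\<^sub>R x \<in> L \<inter> L'"
        using pigeon[OF f1 z, of x] Lat_nat_smult unfolding L_def by blast
      then obtain w where w: "of_nat m *\<^sub>R x = (M ** B) *v ivec w" unfolding L'_def Lat_def by blast
      have "of_nat m *\<^sub>R ((Bi ** M' ** B) *v ivec (axis j 1)) = (Bi ** M') *v (of_nat m *\<^sub>R x)"
        unfolding x_def by (simp add: matrix_vector_mul_assoc matrix_mul_assoc scaleR_matrix_vector_assoc matrix_scaleR_vector_ac matrix_scalar_ac scalar_matrix_assoc)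
      also have "\<dots> = (Bi ** M' ** (M ** B)) *v ivec w" using w by (simp add: matrix_vector_mul_assoc)
      also have "\<dots> = ivec w" using assoc2 BBi by simp
      finally show "(Bi ** M' ** B)$i$j \<in> \<rat>" by (rule col_rat[OF m(1)])
    qed
    show "ratm (Bi ** M ** B) \<and> ratm (Bi ** M' ** B)" using r1 r2 by blast
  next
    assume "ratm (Bi ** M ** B) \<and> ratm (Bi ** M' ** B)"
    then obtain N1 N2 :: nat where N1: "N1 > 0" "intm (of_nat N1 *\<^sub>R (Bi ** M ** B))"
      and N2: "N2 > 0" "intm (of_nat N2 *\<^sub>R (Bi ** M' ** B))"
      using common_denom by blast
    have "finite_index (L \<inter> L') (Lat B)"
    proof (rule subH[OF _ N2(1)])
      fix x assume "x \<in> Lat B"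
      then obtain z where x: "x = B *v ivec z" unfolding Lat_def by blast
      obtain w where w: "(of_nat N2 *\<^sub>R (Bi ** M' ** B)) *v ivec z = ivec w" using intm_act[OF N2(2)] by blast
      have "(M ** B) *v ivec w = (M ** B ** (Bi ** M' ** B)) *v (of_nat N2 *\<^sub>R ivec z)"
        unfolding w[symmetric] by (simp add: matrix_vector_mul_assoc scaleR_matrix_vector_assoc matrix_scaleR_vector_ac matrix_scalar_ac scalar_matrix_assoc matrix_mul_assoc)
      also have "\<dots> = of_nat N2 *\<^sub>R x" unfolding assoc3 x by (simp add: matrix_scaleR_vector_ac scaleR_matrix_vector_assoc)
      finally have "of_nat N2 *\<^sub>R x \<in> L'" unfolding L'_def Lat_def by (metis rangeI)
      moreover have "of_nat N2 *\<^sub>R x \<in> L" unfolding L_def by (rule Lat_nat_smult[OF \<open>x \<in> Lat B\<close>])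
      ultimately show "of_nat N2 *\<^sub>R x \<in> L \<inter> L'" by blast
    qed (simp add: L_def)
    moreover have "finite_index (L \<inter> L') (Lat (M ** B))"
    proof (rule subH[OF _ N1(1)])
      fix x assume "x \<in> Lat (M ** B)"
      then obtain z where x: "x = (M ** B) *v ivec z" unfolding Lat_def by blast
      obtain w where w: "(of_nat N1 *\<^sub>R (Bi ** M ** B)) *v ivec z = ivec w" using intm_act[OF N1(2)] by blast
      have "B *v ivec w = (B ** (Bi ** M ** B)) *v (of_nat N1 *\<^sub>R ivec z)"
        unfolding w[symmetric] by (simp add: matrix_vector_mul_assoc scaleR_matrix_vector_assoc matrix_scaleR_vector_ac matrix_scalar_ac scalar_matrix_assoc matrix_mul_assoc)
      also have "\<dots> = of_nat N1 *\<^sub>R x" unfolding assoc4 x by (simp add: matrix_scaleR_vector_ac scaleR_matrix_vector_assoc)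
      finally have "of_nat N1 *\<^sub>R x \<in> L" unfolding L_def Lat_def by (metis rangeI)
      moreover have "of_nat N1 *\<^sub>R x \<in> L'" unfolding L'_def by (rule Lat_nat_smult[OF \<open>x \<in> Lat (M ** B)\<close>])
      ultimately show "of_nat N1 *\<^sub>R x \<in> L \<inter> L'" by blast
    qed (simp add: L'_def)
    ultimately show "commensurate (Lat B) ((\<lambda>x. M *v x) ` Lat B)"
      unfolding commensurate_def img by (simp add: L_def L'_def)
  qed
qed

lemma ratm_mul: "ratm A \<Longrightarrow> ratm C \<Longrightarrow> ratm (A ** C)"
  unfolding ratm_def by (auto simp: matrix_matrix_mult_def intro!: Rats_sum Rats_mult)

lemma ratm_scale: "q \<in> \<rat> \<Longrightarrow> ratm A \<Longrightarrow> ratm (q *\<^sub>R A)"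
  unfolding ratm_def by (auto intro!: Rats_mult)

lemma ratm_one: "ratm (mat 1)"
  unfolding ratm_def by (auto simp: mat_def)

lemma det_rat: "ratm A \<Longrightarrow> det A \<in> \<rat>"
  unfolding ratm_def det_def by (auto intro!: Rats_sum Rats_mult Rats_prod)

lemma det_scale: "det (a *\<^sub>R (A::real^'n^'n)) = a ^ CARD('n) * det A"
  unfolding det_def
  by (simp add: prod.distrib sum_distrib_left mult_ac)

definition cj :: "real^'n^'n \<Rightarrow> real^'n^'n \<Rightarrow> real^'n^'n \<Rightarrow> real^'n^'n" where
  "cj B Bi A = Bi ** A ** B"

definition Q :: "real^'n^'n \<Rightarrow> real^'n^'n \<Rightarrow> real \<Rightarrow> real^'n^'n \<Rightarrow> bool" where
  "Q B Bi \<alpha> R \<longleftrightarrow> ratm (cj B Bi (\<alpha> *\<^sub>R R)) \<and> ratm (cj B Bi ((1/\<alpha>) *\<^sub>R transpose R))"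

lemma cj_mul: "B ** Bi = mat 1 \<Longrightarrow> cj B Bi (A ** C) = cj B Bi A ** cj B Bi C"
  unfolding cj_def by (metis matrix_mul_assoc matrix_mul_rid)

lemma cj_scale: "cj B Bi (k *\<^sub>R A) = k *\<^sub>R cj B Bi A"
  unfolding cj_def by (simp add: matrix_scalar_ac scalar_matrix_assoc)

lemma Q_mul:
  assumes BBi: "B ** Bi = mat 1" and "Q B Bi \<alpha> R" "Q B Bi \<beta> S" "\<alpha> > 0" "\<beta> > 0"
  shows "Q B Bi (\<alpha> * \<beta>) (R ** S)"
proof -
  have e1: "(\<alpha> * \<beta>) *\<^sub>R (R ** S) = (\<alpha> *\<^sub>R R) ** (\<beta> *\<^sub>R S)"
    by (simp add: matrix_scalar_ac scalar_matrix_assoc ac_simps)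
  have e2: "(1 / (\<alpha> * \<beta>)) *\<^sub>R transpose (R ** S) = ((1/\<beta>) *\<^sub>R transpose S) ** ((1/\<alpha>) *\<^sub>R transpose R)"
    by (simp add: matrix_scalar_ac scalar_matrix_assoc matrix_transpose_mul mult.commute)
  show ?thesis using assms unfolding Q_def e1 e2 cj_mul[OF BBi] by (auto intro: ratm_mul)
qed

lemma Q_inv: "Q B Bi \<alpha> R \<Longrightarrow> Q B Bi (1/\<alpha>) (transpose R)"
  unfolding Q_def by auto

lemma Q_rat:
  assumes "Q B Bi \<alpha> R" "q \<in> \<rat>" "q > 0" "\<alpha> > 0"
  shows "Q B Bi (q * \<alpha>) R"
proof -
  have a: "ratm (cj B Bi (\<alpha> *\<^sub>R R))" and b: "ratm (cj B Bi ((1/\<alpha>) *\<^sub>R transpose R))"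
    using assms(1) unfolding Q_def by auto
  have a': "ratm (q *\<^sub>R cj B Bi (\<alpha> *\<^sub>R R))" using a assms(2) by (rule ratm_scale[rotated])
  have b': "ratm ((1/q) *\<^sub>R cj B Bi ((1/\<alpha>) *\<^sub>R transpose R))" using b assms(2) by (intro ratm_scale) auto
  have e1: "cj B Bi ((q * \<alpha>) *\<^sub>R R) = q *\<^sub>R cj B Bi (\<alpha> *\<^sub>R R)" by (simp add: cj_scale)
  have e2: "cj B Bi ((1 / (q * \<alpha>)) *\<^sub>R transpose R) = (1/q) *\<^sub>R cj B Bi ((1/\<alpha>) *\<^sub>R transpose R)"
    by (simp add: cj_scale)
  show ?thesis unfolding Q_def e1 e2 using a' b' by blast
qed

lemma Q_one: "Bi ** B = mat 1 \<Longrightarrow> Q B Bi 1 (mat 1)"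
  unfolding Q_def cj_def by (simp add: ratm_one)

lemma Q_det:
  fixes R :: "real^'n^'n"
  assumes "B ** Bi = mat 1" "Bi ** B = mat 1" "Q B Bi \<alpha> R" "det R = 1"
  shows "\<alpha> ^ CARD('n) \<in> \<rat>"
proof -
  have "det (cj B Bi (\<alpha> *\<^sub>R R)) = det Bi * det B * det (\<alpha> *\<^sub>R R)"
    unfolding cj_def det_mul by simp
  also have "det Bi * det B = 1" using assms(2) by (metis det_I det_mul)
  finally have "det (cj B Bi (\<alpha> *\<^sub>R R)) = \<alpha> ^ CARD('n)" using assms(4) by (simp add: det_scale)
  moreover have "det (cj B Bi (\<alpha> *\<^sub>R R)) \<in> \<rat>" using assms(3) unfolding Q_def by (auto intro: det_rat)
  ultimately show ?thesis by simp
qed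

lemma SO_one: "mat 1 \<in> SO" unfolding SO_def by (simp add: orthogonal_matrix_id)
lemma SO_mul: "R \<in> SO \<Longrightarrow> S \<in> SO \<Longrightarrow> R ** S \<in> SO"
  unfolding SO_def by (simp add: orthogonal_matrix_mul det_mul)
lemma SO_tr: "R \<in> SO \<Longrightarrow> transpose R \<in> SO"
  unfolding SO_def by (simp add: orthogonal_matrix_transpose det_transpose)
lemma SO_inv: "R \<in> SO \<Longrightarrow> transpose R ** R = mat 1"
  unfolding SO_def orthogonal_matrix_def by simp
lemma SO_inv2: "R \<in> SO \<Longrightarrow> R ** transpose R = mat 1"
  unfolding SO_def orthogonal_matrix_def by simp

theorem mainTheorem4:
  fixes L :: "(real^'n) set" and p :: nat
  assumes "prime p" and "CARD('n) = p" and "is_lattice L"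
  shows "elementary_abelian p (SOS_group L Mod SOC L)"
proof -
  obtain B :: "real^'n^'n" where "invertible B"
    and LB: "L = range (\<lambda>z::int^'n. B *v (\<chi> i. real_of_int (z $ i)))"
    using assms(3) unfolding is_lattice_def by blast
  then obtain Bi where BBi: "B ** Bi = mat 1" "Bi ** B = mat 1" unfolding invertible_def by blast
  have LL: "L = Lat B" unfolding LB Lat_def ivec_def by simp
  have SOS_iff: "R \<in> SOS L \<longleftrightarrow> R \<in> SO \<and> (\<exists>\<alpha>>0. Q B Bi \<alpha> R)" for R
  proof -
    have "commensurate L ((\<lambda>x. \<alpha> *\<^sub>R (R *v x)) ` L) \<longleftrightarrow> Q B Bi \<alpha> R" if "R \<in> SO" "\<alpha> > 0" for \<alpha>
    proof -
      have M: "(\<alpha> *\<^sub>R R) ** ((1/\<alpha>) *\<^sub>R transpose R) = mat 1"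
              "((1/\<alpha>) *\<^sub>R transpose R) ** (\<alpha> *\<^sub>R R) = mat 1"
        using that SO_inv[OF that(1)] SO_inv2[OF that(1)]
        by (simp_all add: matrix_scalar_ac scalar_matrix_assoc)
      have eq: "(\<lambda>x. \<alpha> *\<^sub>R (R *v x)) = (\<lambda>x. (\<alpha> *\<^sub>R R) *v x)" by (simp add: scaleR_matrix_vector_assoc)
      show ?thesis unfolding Q_def cj_def LL eq by (rule comm_iff[OF BBi M])
    qed
    then show ?thesis unfolding SOS_def by auto
  qed
  have SOC_iff: "R \<in> SOC L \<longleftrightarrow> R \<in> SO \<and> Q B Bi 1 R" for R
  proof -
    have "commensurate L ((\<lambda>x. R *v x) ` L) \<longleftrightarrow> Q B Bi 1 R" if "R \<in> SO"
      using comm_iff[OF BBi SO_inv2[OF that] SO_inv[OF that]] unfolding Q_def cj_def LL by simp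
    then show ?thesis unfolding SOC_def by auto
  qed
  have SOS_SO: "A \<in> SO" if "A \<in> SOS L" for A using that unfolding SOS_iff by blast
  define G where "G = SOS_group L"
  have carrG: "carrier G = SOS L" and multG: "\<And>A C. A \<otimes>\<^bsub>G\<^esub> C = A ** C" and oneG: "\<one>\<^bsub>G\<^esub> = mat 1"
    by (simp_all add: G_def SOS_group_def)
  have tr_SOS: "transpose A \<in> SOS L" if hA: "A \<in> SOS L" for A
  proof -
    obtain \<alpha> where "A \<in> SO" "\<alpha> > 0" "Q B Bi \<alpha> A" using hA(1) unfolding SOS_iff by blast
    then have "transpose A \<in> SO" "1/\<alpha> > 0" "Q B Bi (1/\<alpha>) (transpose A)"
      using SO_tr Q_inv by auto
    then show ?thesis unfolding SOS_iff by blast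
  qed
  have mul_SOS: "A ** C \<in> SOS L" if hA: "A \<in> SOS L" "C \<in> SOS L" for A C
  proof -
    obtain \<alpha> where "A \<in> SO" "\<alpha> > 0" "Q B Bi \<alpha> A" using hA(1) unfolding SOS_iff by blast
    moreover obtain \<beta> where "C \<in> SO" "\<beta> > 0" "Q B Bi \<beta> C" using hA(2) unfolding SOS_iff by blast
    ultimately have "A ** C \<in> SO" "\<alpha>*\<beta> > 0" "Q B Bi (\<alpha>*\<beta>) (A ** C)"
      using SO_mul Q_mul[OF BBi(1)] by auto
    then show ?thesis unfolding SOS_iff by blast
  qed
  have one_SOS: "mat 1 \<in> SOS L" unfolding SOS_iff using Q_one[OF BBi(2)] SO_one zero_less_one by blast
  have grp: "group G"
  proof (rule groupI)
    show "\<one>\<^bsub>G\<^esub> \<in> carrier G" using one_SOS by (simp add: carrG oneG)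
  next
    fix x y assume "x \<in> carrier G" "y \<in> carrier G"
    then show "x \<otimes>\<^bsub>G\<^esub> y \<in> carrier G" using mul_SOS by (simp add: carrG multG)
  next
    fix x y z show "x \<otimes>\<^bsub>G\<^esub> y \<otimes>\<^bsub>G\<^esub> z = x \<otimes>\<^bsub>G\<^esub> (y \<otimes>\<^bsub>G\<^esub> z)"
      by (simp add: multG matrix_mul_assoc)
  next
    fix x show "\<one>\<^bsub>G\<^esub> \<otimes>\<^bsub>G\<^esub> x = x" by (simp add: multG oneG)
  next
    fix x assume "x \<in> carrier G"
    then show "\<exists>y\<in>carrier G. y \<otimes>\<^bsub>G\<^esub> x = \<one>\<^bsub>G\<^esub>"
      using tr_SOS[of x] SO_inv[OF SOS_SO[of x]] unfolding carrG multG oneG by blast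
  qed
  have invG: "inv\<^bsub>G\<^esub> A = transpose A" if "A \<in> carrier G" for A
    using group.inv_equality[OF grp, of "transpose A" A] that tr_SOS[of A] SO_inv[OF SOS_SO[of A]]
    unfolding carrG multG oneG by blast
  have SOC_SOS: "SOC L \<subseteq> SOS L"
  proof
    fix R assume "R \<in> SOC L"
    then have "R \<in> SO" "Q B Bi 1 R" unfolding SOC_iff by auto
    then show "R \<in> SOS L" unfolding SOS_iff by (intro conjI exI[of _ 1]) auto
  qed
  have sub: "subgroup (SOC L) G"
  proof (rule group.subgroupI[OF grp])
    show "SOC L \<subseteq> carrier G" using SOC_SOS carrG by simp
    show "SOC L \<noteq> {}" using SOC_iff SO_one Q_one[OF BBi(2)] by blast
  next
    fix a assume a: "a \<in> SOC L"
    then have "inv\<^bsub>G\<^esub> a = transpose a" using invG SOC_SOS carrG by blast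
    then show "inv\<^bsub>G\<^esub> a \<in> SOC L" using a Q_inv[of B Bi 1 a] SO_tr unfolding SOC_iff by auto
  next
    fix a b assume "a \<in> SOC L" "b \<in> SOC L"
    then show "a \<otimes>\<^bsub>G\<^esub> b \<in> SOC L" using Q_mul[OF BBi(1), of 1 a 1 b] SO_mul
      unfolding SOC_iff multG by auto
  qed
  have nrm: "SOC L \<lhd> G"
    unfolding group.normal_inv_iff[OF grp]
  proof (intro conjI sub ballI)
    fix x h assume x: "x \<in> carrier G" and h: "h \<in> SOC L"
    obtain \<alpha> where xS: "x \<in> SO" and ap: "\<alpha> > 0" and Qx: "Q B Bi \<alpha> x"
      using x unfolding carrG SOS_iff by blast
    have hS: "h \<in> SO" and Qh: "Q B Bi 1 h" using h unfolding SOC_iff by auto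
    have Q1: "Q B Bi \<alpha> (x ** h)" using Q_mul[OF BBi(1) Qx Qh] ap by simp
    have Q2: "Q B Bi 1 (x ** h ** transpose x)" using Q_mul[OF BBi(1) Q1 Q_inv[OF Qx]] ap by simp
    have S2: "x ** h ** transpose x \<in> SO" by (rule SO_mul[OF SO_mul[OF xS hS] SO_tr[OF xS]])
    show "x \<otimes>\<^bsub>G\<^esub> h \<otimes>\<^bsub>G\<^esub> inv\<^bsub>G\<^esub> x \<in> SOC L"
      unfolding invG[OF x] multG SOC_iff using Q2 S2 by blast
  qed
  interpret N: normal "SOC L" G by (rule nrm)
  have fgrp: "group (G Mod SOC L)" by (rule N.factorgroup_is_group)
  have comm: "comm_group (G Mod SOC L)"
  proof (rule group.group_comm_groupI[OF fgrp])
    fix X Y assume "X \<in> carrier (G Mod SOC L)" "Y \<in> carrier (G Mod SOC L)"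
    then obtain a b where a: "a \<in> carrier G" "X = SOC L #>\<^bsub>G\<^esub> a"
      and b: "b \<in> carrier G" "Y = SOC L #>\<^bsub>G\<^esub> b" unfolding carrier_FactGroup by blast
    have ab: "X \<otimes>\<^bsub>G Mod SOC L\<^esub> Y = SOC L #>\<^bsub>G\<^esub> (a ** b)"
      using a b N.rcos_sum by (simp add: multG)
    have ba: "Y \<otimes>\<^bsub>G Mod SOC L\<^esub> X = SOC L #>\<^bsub>G\<^esub> (b ** a)"
      using a b N.rcos_sum by (simp add: multG)
    obtain \<alpha> where aS: "a \<in> SO" and ap: "\<alpha> > 0" and Qa: "Q B Bi \<alpha> a"
      using a(1) unfolding carrG SOS_iff by blast
    obtain \<beta> where bS: "b \<in> SO" and bp: "\<beta> > 0" and Qb: "Q B Bi \<beta> b"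
      using b(1) unfolding carrG SOS_iff by blast
    define h where "h = a ** b ** transpose (b ** a)"
    have Qab: "Q B Bi (\<alpha> * \<beta>) (a ** b)" by (rule Q_mul[OF BBi(1) Qa Qb ap bp])
    have Qba: "Q B Bi (1 / (\<beta> * \<alpha>)) (transpose (b ** a))" by (rule Q_inv[OF Q_mul[OF BBi(1) Qb Qa bp ap]])
    have pos: "\<alpha> * \<beta> > 0" "1 / (\<beta> * \<alpha>) > 0" using ap bp by auto
    have "Q B Bi (\<alpha> * \<beta> * (1 / (\<beta> * \<alpha>))) h" unfolding h_def by (rule Q_mul[OF BBi(1) Qab Qba pos])
    moreover have "\<alpha> * \<beta> * (1 / (\<beta> * \<alpha>)) = 1" using ap bp by simp
    moreover have "h \<in> SO" unfolding h_def by (rule SO_mul[OF SO_mul[OF aS bS] SO_tr[OF SO_mul[OF bS aS]]])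
    ultimately have hS: "h \<in> SOC L" unfolding SOC_iff by simp
    have "h ** (b ** a) = (a ** b) ** (transpose (b ** a) ** (b ** a))"
      unfolding h_def by (simp only: matrix_mul_assoc)
    then have eq: "h ** (b ** a) = a ** b"
      unfolding SO_inv[OF SO_mul[OF bS aS]] by simp
    have "a ** b \<in> SOC L #>\<^bsub>G\<^esub> (b ** a)" unfolding r_coset_def multG
      by (rule UN_I[OF hS]) (simp add: eq)
    moreover have "b ** a \<in> carrier G" using mul_SOS b(1) a(1) unfolding carrG by blast
    ultimately have "SOC L #>\<^bsub>G\<^esub> (b ** a) = SOC L #>\<^bsub>G\<^esub> (a ** b)"
      by (rule group.repr_independence[OF grp _ _ sub])
    then show "X \<otimes>\<^bsub>G Mod SOC L\<^esub> Y = Y \<otimes>\<^bsub>G Mod SOC L\<^esub> X" using ab ba by simp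
  qed
  have pw: "X [^]\<^bsub>G Mod SOC L\<^esub> p = \<one>\<^bsub>G Mod SOC L\<^esub>" if hX: "X \<in> carrier (G Mod SOC L)" for X
  proof -
    obtain a where a: "a \<in> carrier G" "X = SOC L #>\<^bsub>G\<^esub> a"
      using hX unfolding carrier_FactGroup by blast
    obtain \<alpha> where "a \<in> SO" "\<alpha> > 0" and Qa: "Q B Bi \<alpha> a" using a(1) unfolding carrG SOS_iff by blast
    have Qn: "Q B Bi (\<alpha> ^ n) (a [^]\<^bsub>G\<^esub> n)" for n
    proof (induction n)
      case 0 then show ?case using Q_one[OF BBi(2)] by (simp add: oneG)
    next
      case (Suc n)
      have "Q B Bi (\<alpha> ^ n * \<alpha>) ((a [^]\<^bsub>G\<^esub> n) ** a)"
        using Q_mul[OF BBi(1) Suc Qa] \<open>\<alpha> > 0\<close> by simp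
      then show ?case by (simp add: multG mult.commute)
    qed
    have "\<alpha> ^ p \<in> \<rat>" using Q_det[OF BBi Qa] \<open>a \<in> SO\<close> assms(2) unfolding SO_def by simp
    moreover have "\<alpha> ^ p > 0" using \<open>\<alpha> > 0\<close> by simp
    ultimately have "Q B Bi ((1 / \<alpha> ^ p) * \<alpha> ^ p) (a [^]\<^bsub>G\<^esub> p)"
      by (intro Q_rat[OF Qn]) auto
    moreover have "(1 / \<alpha> ^ p) * \<alpha> ^ p = 1" using \<open>\<alpha> > 0\<close> by simp
    ultimately have "Q B Bi 1 (a [^]\<^bsub>G\<^esub> p)" by metis
    moreover have "a [^]\<^bsub>G\<^esub> p \<in> SO"
      using monoid.nat_pow_closed[OF group.is_monoid[OF grp] a(1)] SOS_SO unfolding carrG by blast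
    ultimately have inH: "a [^]\<^bsub>G\<^esub> p \<in> SOC L" unfolding SOC_iff by simp
    have "X [^]\<^bsub>G Mod SOC L\<^esub> p = SOC L #>\<^bsub>G\<^esub> (a [^]\<^bsub>G\<^esub> p)"
      using N.FactGroup_pow[OF a(1)] a(2) by simp
    also have "\<dots> = SOC L" using subgroup.rcos_const[OF sub grp inH] .
    finally show ?thesis by simp
  qed
  show ?thesis using comm pw unfolding elementary_abelian_def G_def by blast
qed

end
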